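(* Let $n$ be a non-negative integer. Then \[ \sum_{k=0}^{\lfloor n/2\rfloor}\binom{n}{2k}2^{n-2k}\binom{2k}{k}H_{2k}^{(2)}=\binom{2n}{n}H_n^{(2)}-\sum_{k=0}^{n-1}\binom{2k}{k}2^{n-k}\frac{H_n-H_k}{n-k}, \] \[ \sum_{k=0}^{n}(-1)^k\binom{n}{k}2^{-k}\binom{2k}{k}H_k^{(2)}=-\sum_{k=0}^{\lfloor n/2\rfloor-1}\binom{2k}{k}2^{-2k}\frac{H_n-H_{2k}}{n-2k}+\begin{cases}2^{-n}\binom{n}{n/2}H_n^{(2)},&n\text{ even},\\[2pt]-2^{-n+1}\binom{n-1}{(n-1)/2}\dfrac1n,&n\text{ odd},\end{cases} \] and, more generally, for every real number $v$, \[ \sum_{k=0}^{\lfloor n/2\rfloor}\binom{n}{2k}2^{n-2k}\binom{2k}{k}\binom{(2k+v)/2}{v/2}^{-1}H_{2k}^{(2)}=\binom{2n+v}{(2n+v)/2}\binom{n+v}{v/2}^{-1}H_n^{(2)}-\sum_{k=0}^{n-1}\binom{2k+v}{(2k+v)/2}2^{n-k}\binom{k+v}{v/2}^{-1}\frac{H_n-H_k}{n-k}, \] \[ \begin{aligned} \sum_{k=0}^{n}(-1)^k\binom{n}{k}2^{-k}\binom{2k+v}{(2k+v)/2}\binom{k+v}{v/2}^{-1}H_k^{(2)} &=-\sum_{k=0}^{\lfloor n/2\rfloor-1}\binom{2k}{k}2^{-2k}\binom{(2k+v)/2}{v/2}^{-1}\frac{H_n-H_{2k}}{n-2k}\\ &\quad+\begin{cases}\binom{n}{n/2}2^{-n}\binom{(n+v)/2}{v/2}^{-1}H_n^{(2)},&n\text{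 even},\\[2pt]-\binom{n-1}{(n-1)/2}2^{-n+1}\binom{(n-1+v)/2}{v/2}^{-1}\dfrac1n,&n\text{ odd}.\end{cases} \end{aligned} \]
   Context: For integers $m\ge0$, $H_m=\sum_{j=1}^m 1/j$ and $H_m^{(2)}=\sum_{j=1}^m 1/j^2$. Binomial coefficients with real or complex entries: $\binom{x}{y}=\frac{\Gamma(x+1)}{\Gamma(y+1)\Gamma(x-y+1)}$. Empty sums are zero. *)

theory Defs
  imports "HOL-Analysis.Analysis"
begin

definition H :: "nat \<Rightarrow> real" where
  "H m = (\<Sum>j=1..m. 1 / real j)"

definition H2 :: "nat \<Rightarrow> real" where
  "H2 m = (\<Sum>j=1..m. 1 / (real j)^2)"

definition gbinom :: "real \<Rightarrow> real \<Rightarrow> real" where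
  "gbinom x y = Gamma (x + 1) / (Gamma (y + 1) * Gamma (x - y + 1))"

end

theory Submission
  imports Defs
begin


lemma H_Suc: "H (Suc m) = H m + 1 / real (Suc m)"
  by (simp add: H_def)
lemma H2_Suc: "H2 (Suc m) = H2 m + 1 / (real (Suc m))^2"
  by (simp add: H2_def)

definition gg :: "nat \<Rightarrow> nat \<Rightarrow> real" where
  "gg n k = (H n - H k) / (real n - real k)"

lemma gg_Suc: "k < n \<Longrightarrow> gg (Suc n) (Suc k) = gg n k - 1 / (real (Suc n) * real (Suc k))"
proof -
  assume "k < n"
  then have ne: "real n - real k \<noteq> 0" by simp
  have "gg (Suc n) (Suc k) = (H n - H k) / (real n - real k) + (1/real (Suc n) - 1/real (Suc k)) / (real n - real k)"
    by (simp add: gg_def H_Suc add_divide_distrib[symmetric])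
  also have "1/real (Suc n) - 1/real (Suc k) = - (real n - real k) / (real (Suc n) * real (Suc k))"
    by (simp add: field_simps)
  also have "(- (real n - real k) / (real (Suc n) * real (Suc k))) / (real n - real k) = - 1 / (real (Suc n) * real (Suc k))"
  proof -
    have "\<And>d a::real. d \<noteq> 0 \<Longrightarrow> (-d/a)/d = -1/a" by (simp add: field_simps)
    then show ?thesis using ne by blast
  qed
  finally show ?thesis by (simp add: gg_def)
qed

lemma S0: "(\<Sum>k<n. gg n k) = H2 n"
proof (induction n)
  case 0 then show ?case by (simp add: H2_def)
next
  case (Suc n)
  have "(\<Sum>k<Suc n. gg (Suc n) k) = gg (Suc n) 0 + (\<Sum>k<n. gg (Suc n) (Suc k))"
    by (rule sum.lessThan_Suc_shift)
  also have "(\<Sum>k<n. gg (Suc n) (Suc k)) = (\<Sum>k<n. gg n k - 1 / (real (Suc n) * real (Suc k)))"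
    by (rule sum.cong) (auto simp: gg_Suc)
  also have "\<dots> = H2 n - (\<Sum>k<n. 1 / real (Suc k)) / real (Suc n)"
  proof -
    have "(\<Sum>k<n. 1 / (real (Suc n) * real (Suc k))) = (\<Sum>k<n. 1 / real (Suc k)) / real (Suc n)"
      by (simp add: sum_divide_distrib mult.commute)
    then show ?thesis by (simp add: sum_subtractf Suc.IH)
  qed
  also have "(\<Sum>k<n. 1 / real (Suc k)) = H n"
    unfolding H_def by (induction n) auto
  finally have eq: "(\<Sum>k<Suc n. gg (Suc n) k) = gg (Suc n) 0 + (H2 n - H n / real (Suc n))" .
  have g0: "gg (Suc n) 0 = H (Suc n) / real (Suc n)" by (simp add: gg_def H_def)
  have "gg (Suc n) 0 + (H2 n - H n / real (Suc n)) = H2 (Suc n)"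
  proof -
    have gen: "\<And>x h h2::real. x \<noteq> 0 \<Longrightarrow> (h + 1/x)/x + (h2 - h/x) = h2 + 1/x^2"
      by (simp add: field_simps power2_eq_square)
    show ?thesis unfolding g0 H_Suc H2_Suc by (rule gen) simp
  qed
  with eq show ?case by simp
qed


lemma sum_choose_lessThan: "(\<Sum>k<n. real (k choose i)) = real (n choose Suc i)"
  by (induction n) auto

lemma alg_T:
  fixes a b X Y Z h2n h2i :: real
  assumes a: "a \<noteq> 0" and b: "b \<noteq> 0" and Z: "Z = X + Y" and aZ: "a * Z = b * X"
  shows "X * (h2n - h2i) + Y * (h2n - (h2i + 1/a^2)) - Y / (a * b) = Z * ((h2n + 1/b^2) - (h2i + 1/a^2))"
proof -
  have Z': "Z = b * X / a" using aZ a by (simp add: field_simps)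
  have Y': "Y = (b - a) * X / a" using Z Z' a by (simp add: field_simps)
  show ?thesis unfolding Z' Y' using a b by (simp add: field_simps power2_eq_square)
qed

lemma T_lemma: "(\<Sum>k<n. real (k choose j) * gg n k) = real (n choose j) * (H2 n - H2 j)"
proof (induction n arbitrary: j)
  case 0 then show ?case by (cases j) (auto simp: H2_def)
next
  case (Suc n)
  show ?case
  proof (cases j)
    case 0 then show ?thesis using S0[of "Suc n"] by (simp add: H2_def)
  next
    case (Suc i)
    have "(\<Sum>k<Suc n. real (k choose j) * gg (Suc n) k)
        = real (0 choose j) * gg (Suc n) 0 + (\<Sum>k<n. real (Suc k choose j) * gg (Suc n) (Suc k))"
      by (rule sum.lessThan_Suc_shift)
    also have "\<dots> = (\<Sum>k<n. (real (k choose i) + real (k choose j)) * (gg n k - 1 / (real (Suc n) * real (Suc k))))"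
      using Suc by (auto intro!: sum.cong simp: gg_Suc)
    also have "\<dots> = (\<Sum>k<n. real (k choose i) * gg n k) + (\<Sum>k<n. real (k choose j) * gg n k)
        - (\<Sum>k<n. real (Suc k choose j) / real (Suc k)) / real (Suc n)"
      using Suc by (simp add: algebra_simps sum.distrib sum_subtractf sum_divide_distrib)
    also have "(\<Sum>k<n. real (Suc k choose j) / real (Suc k)) = (\<Sum>k<n. real (k choose i) / real (Suc i))"
    proof (rule sum.cong)
      fix k
      have "real (Suc k) * real (k choose i) = real (Suc k choose Suc i) * real (Suc i)"
        using Suc_times_binomial_eq[of k i] by (metis of_nat_mult)
      then show "real (Suc k choose j) / real (Suc k) = real (k choose i) / real (Suc i)"
        using Suc by (simp add: field_simps del: of_nat_Suc)
    qed simp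
    also have "\<dots> = real (n choose j) / real (Suc i)"
      using Suc by (simp add: sum_divide_distrib[symmetric] sum_choose_lessThan)
    finally have eq: "(\<Sum>k<Suc n. real (k choose j) * gg (Suc n) k) =
       real (n choose i) * (H2 n - H2 i) + real (n choose j) * (H2 n - H2 j) - real (n choose j) / real (Suc i) / real (Suc n)"
      using Suc.IH by simp
    have aZ: "real (Suc i) * real (Suc n choose Suc i) = real (Suc n) * real (n choose i)"
      using Suc_times_binomial_eq[of n i] by (metis of_nat_mult mult.commute)
    have Z: "real (Suc n choose Suc i) = real (n choose i) + real (n choose Suc i)" by simp
    have "real (n choose i) * (H2 n - H2 i) + real (n choose Suc i) * (H2 n - (H2 i + 1/(real (Suc i))^2))
       - real (n choose Suc i) / (real (Suc i) * real (Suc n))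
       = real (Suc n choose Suc i) * ((H2 n + 1/(real (Suc n))^2) - (H2 i + 1/(real (Suc i))^2))"
      by (rule alg_T[OF _ _ Z aZ]) auto
    then show ?thesis using eq Suc by (simp add: H2_Suc del: of_nat_Suc) 
  qed
qed


lemma extend_choose_sum:
  assumes "k \<le> n"
  shows "(\<Sum>m\<le>k. real (k choose m) * f m) = (\<Sum>m\<le>n. real (k choose m) * f m)"
  by (rule sum.mono_neutral_left) (use assms in auto)

lemma gen_I:
  assumes b: "\<And>k. b k = (\<Sum>m\<le>k. real (k choose m) * a m)"
  shows "(\<Sum>m\<le>n. real (n choose m) * a m * H2 m) = b n * H2 n - (\<Sum>k<n. b k * gg n k)"
proof -
  have "(\<Sum>k<n. b k * gg n k) = (\<Sum>k<n. \<Sum>m\<le>n. real (k choose m) * a m * gg n k)"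
  proof (rule sum.cong)
    fix k assume "k \<in> {..<n}"
    then have "b k = (\<Sum>m\<le>n. real (k choose m) * a m)" using b extend_choose_sum[of k n a] by simp
    then show "b k * gg n k = (\<Sum>m\<le>n. real (k choose m) * a m * gg n k)"
      by (simp add: sum_distrib_right)
  qed simp
  also have "\<dots> = (\<Sum>m\<le>n. a m * (\<Sum>k<n. real (k choose m) * gg n k))"
    by (subst sum.swap) (simp add: sum_distrib_left algebra_simps)
  also have "\<dots> = (\<Sum>m\<le>n. a m * (real (n choose m) * (H2 n - H2 m)))"
    by (simp add: T_lemma)
  finally have 1: "(\<Sum>k<n. b k * gg n k) = (\<Sum>m\<le>n. a m * (real (n choose m) * (H2 n - H2 m)))" .
  have 2: "b n * H2 n = (\<Sum>m\<le>n. real (n choose m) * a m * H2 n)"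
    using b[of n] by (simp add: sum_distrib_right)
  show ?thesis unfolding 1 2
    by (simp add: sum_subtractf[symmetric] algebra_simps)
qed

lemma alt_inner:
  assumes "m \<le> n"
  shows "(\<Sum>k\<le>n. (-1)^k * real (n choose k) * real (k choose m)) = (if m = n then (-1)^n else 0)"
proof -
  have "(\<Sum>k\<le>n. (-1)^k * real (n choose k) * real (k choose m))
      = (\<Sum>k\<in>{m..n}. (-1)^k * real (n choose k) * real (k choose m))"
    by (rule sum.mono_neutral_right) auto
  also have "\<dots> = (\<Sum>k\<in>{m..n}. real (n choose m) * ((-1)^k * real ((n - m) choose (k - m))))"
  proof (rule sum.cong)
    fix k assume "k \<in> {m..n}"
    then have "(n choose k) * (k choose m) = (n choose m) * ((n - m) choose (k - m))"
      by (intro choose_mult) auto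
    then have "real (n choose k) * real (k choose m) = real (n choose m) * real ((n - m) choose (k - m))"
      by (metis of_nat_mult)
    then show "(-1)^k * real (n choose k) * real (k choose m) = real (n choose m) * ((-1)^k * real ((n - m) choose (k - m)))"
      by (simp add: algebra_simps)
  qed simp
  also have "\<dots> = real (n choose m) * (\<Sum>k\<in>{m..n}. (-1)^k * real ((n - m) choose (k - m)))"
    by (simp add: sum_distrib_left)
  also have "(\<Sum>k\<in>{m..n}. (-1)^k * real ((n - m) choose (k - m))) = (\<Sum>i\<in>{0..n-m}. (-1)^(i+m) * real ((n - m) choose i))"
  proof -
    have "{m..n} = {0+m..(n-m)+m}" using assms by simp
    then show ?thesis by (simp only: sum.shift_bounds_cl_nat_ivl) simp
  qed
  also have "\<dots> = (-1)^m * (\<Sum>i\<le>n-m. (-1)^i * real ((n - m) choose i))"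
    by (simp add: sum_distrib_left power_add atLeast0AtMost algebra_simps)
  finally have main: "(\<Sum>k\<le>n. (-1)^k * real (n choose k) * real (k choose m)) = real (n choose m) * ((-1)^m * (\<Sum>i\<le>n-m. (-1)^i * real ((n - m) choose i)))" .
  show ?thesis
  proof (cases "m = n")
    case False
    then have "n - m > 0" using assms by simp
    then have "(\<Sum>i\<le>n-m. (-1)^i * real ((n - m) choose i)) = 0" by (rule choose_alternating_sum)
    with False show ?thesis using main by simp
  qed (use main in simp)
qed

lemma gen_inv:
  assumes b: "\<And>k. b k = (\<Sum>m\<le>k. real (k choose m) * a m)"
  shows "(\<Sum>k\<le>n. real (n choose k) * (-1)^k * b k) = (-1)^n * a n"
proof -
  have "(\<Sum>k\<le>n. real (n choose k) * (-1)^k * b k) = (\<Sum>k\<le>n. \<Sum>m\<le>n. real (n choose k) * (-1)^k * (real (k choose m) * a m))"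
  proof (rule sum.cong)
    fix k assume "k \<in> {..n}"
    then have "b k = (\<Sum>m\<le>n. real (k choose m) * a m)" using b extend_choose_sum[of k n a] by simp
    then show "real (n choose k) * (-1)^k * b k = (\<Sum>m\<le>n. real (n choose k) * (-1)^k * (real (k choose m) * a m))"
      by (simp add: sum_distrib_left)
  qed simp
  also have "\<dots> = (\<Sum>m\<le>n. a m * (\<Sum>k\<le>n. (-1)^k * real (n choose k) * real (k choose m)))"
    by (subst sum.swap) (simp add: sum_distrib_left algebra_simps)
  also have "\<dots> = (\<Sum>m\<le>n. (if m = n then (-1)^n * a n else 0))"
    by (rule sum.cong) (auto simp: alt_inner)
  finally show ?thesis by simp
qed


definition ww :: "real \<Rightarrow> nat \<Rightarrow> real" where
  "ww v k = pochhammer (1/2) k / pochhammer (v/2+1) k"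

definition cc :: "real \<Rightarrow> nat \<Rightarrow> real" where
  "cc v k = pochhammer (v+1) (2*k) / (pochhammer (v/2+1) k * pochhammer (v+1) k)"

lemma poch_ne1:
  assumes "\<not> (v \<in> \<int> \<and> v < 0)" shows "pochhammer (v/2+1) k \<noteq> (0::real)"
proof
  assume "pochhammer (v/2+1) k = (0::real)"
  then obtain i where "v/2+1 = - real i" by (auto simp: pochhammer_eq_0_iff)
  then have "v = - real (2*i+2)" by simp
  then have "v \<in> \<int> \<and> v < 0" by simp
  with assms show False by blast
qed

lemma poch_ne2:
  assumes "\<not> (v \<in> \<int> \<and> v < 0)" shows "pochhammer (v+1) k \<noteq> (0::real)"
proof
  assume "pochhammer (v+1) k = (0::real)"
  then obtain i where "v+1 = - real i" by (auto simp: pochhammer_eq_0_iff)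
  then have "v = - real (i+1)" by simp
  then have "v \<in> \<int> \<and> v < 0" by simp
  with assms show False by blast
qed

lemma ne3:
  assumes "\<not> (v \<in> \<int> \<and> v < 0)" shows "real k + v + 1 \<noteq> 0"
proof
  assume "real k + v + 1 = 0"
  then have "v = - real (k+1)" by simp
  then have "v \<in> \<int> \<and> v < 0" by simp
  with assms show False by blast
qed

lemma ww_Suc:
  assumes "\<not> (v \<in> \<int> \<and> v < 0)"
  shows "ww v (Suc k) * (2 * real k + v + 2) = ww v k * (2 * real k + 1)"
proof -
  have p: "pochhammer (v/2+1) k \<noteq> 0" using poch_ne1[OF assms] .
  have q: "v/2+1+ real k \<noteq> 0" using poch_ne1[OF assms, of "Suc k"] by (simp add: pochhammer_Suc)
  have gen: "\<And>P Q a r::real. Q \<noteq> 0 \<Longrightarrow> r \<noteq> 0 \<Longrightarrow> (P*a/(Q*r))*(2*r) = (P/Q)*(2*a)"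
    by (simp add: field_simps)
  have "ww v (Suc k) * (2 * (v/2+1+ real k)) = ww v k * (2 * (1/2 + real k))"
    unfolding ww_def pochhammer_Suc by (rule gen[OF p q])
  then show ?thesis by (simp add: algebra_simps)
qed

lemma cc_Suc:
  assumes "\<not> (v \<in> \<int> \<and> v < 0)"
  shows "cc v (Suc k) * (real k + v + 1) = 2 * (2 * real k + v + 1) * cc v k"
proof -
  have p1: "pochhammer (v/2+1) k \<noteq> 0" using poch_ne1[OF assms] .
  have q1: "v/2+1+ real k \<noteq> 0" using poch_ne1[OF assms, of "Suc k"] by (simp add: pochhammer_Suc)
  have p2: "pochhammer (v+1) k \<noteq> 0" using poch_ne2[OF assms] .
  have q2: "v+1+ real k \<noteq> 0" using poch_ne2[OF assms, of "Suc k"] by (simp add: pochhammer_Suc)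
  have e: "pochhammer (v+1) (2 * Suc k) = pochhammer (v+1) (2*k) * (v + 1 + 2 * real k) * (v + 2 + 2 * real k)"
    by (simp add: pochhammer_Suc algebra_simps)
  have gen: "\<And>P A B a c r::real. A \<noteq> 0 \<Longrightarrow> B \<noteq> 0 \<Longrightarrow> r \<noteq> 0 \<Longrightarrow> a \<noteq> 0 \<Longrightarrow>
     (P * c * (2*r) / (A * r * (B * a))) * a = 2 * c * (P / (A * B))"
    by (simp add: field_simps)
  have "(pochhammer (v+1) (2*k) * (v + 1 + 2 * real k) * (2 * (v/2+1+real k)) / (pochhammer (v/2+1) k * (v/2+1+real k) * (pochhammer (v+1) k * (v+1+real k)))) * (v+1+real k)
      = 2 * (v + 1 + 2 * real k) * (pochhammer (v+1) (2*k) / (pochhammer (v/2+1) k * pochhammer (v+1) k))"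
    by (rule gen[OF p1 p2 q1 q2])
  moreover have "v + 1 + real k + real k = v + 1 + 2 * real k" "2 * (v/2+1+real k) = v + 2 + 2 * real k" by simp_all
  ultimately show ?thesis unfolding cc_def e pochhammer_Suc by (simp add: algebra_simps)
qed


lemma binom_F2: "real (Suc k) * real (n choose Suc k) = (real n - real k) * real (n choose k)"
proof -
  have a: "real (Suc n) * real (n choose k) = real (Suc n choose Suc k) * real (Suc k)"
    using Suc_times_binomial_eq[of n k] by (metis of_nat_mult)
  have b: "real (Suc n choose Suc k) = real (n choose k) + real (n choose Suc k)" by simp
  show ?thesis using a unfolding b by (simp add: algebra_simps)
qed

lemma binom_F3: "(real n + 1 - real k) * real (Suc n choose k) = real (Suc n) * real (n choose k)"
proof (cases "k \<le> Suc n")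
  case True
  have "(Suc n - k) * (Suc n choose k) = Suc n * (n choose k)"
    using binomial_absorb_comp[of "Suc n" k] by simp
  then have "real (Suc n - k) * real (Suc n choose k) = real (Suc n) * real (n choose k)"
    by (metis of_nat_mult)
  with True show ?thesis by (simp add: of_nat_diff algebra_simps)
next
  case False
  then have a: "Suc n < k" and b: "n < k" by simp_all
  have z1: "Suc n choose k = 0" by (rule binomial_eq_0[OF a])
  have z2: "n choose k = 0" by (rule binomial_eq_0[OF b])
  show ?thesis unfolding z1 z2 by simp
qed

lemma alg_B:
  fixes N J v Z0 X0 W :: real
  assumes "N + 1 \<noteq> 0" and "(N + 1 - 2*J) * Z0 = (N + 1) * X0"
  shows "(N+v+1)*Z0*W - (2*N+v+1)*X0*W = -(N-2*J)*X0*W + 2/(N+1)*Z0*J*(2*J+v)*W"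
proof -
  define M where "M = N + 1"
  have M: "M \<noteq> 0" using assms(1) M_def by simp
  have N: "N = M - 1" using M_def by simp
  have X: "X0 = (M-2*J)*Z0/M" using assms M_def by (simp add: field_simps)
  show ?thesis unfolding X N using M by (simp add: field_simps)
qed

lemma alg_G1:
  fixes N j v W W1 Z2 X1 X0 :: real
  assumes "W1*(2*j+v+2) = W*(2*j+1)" "(2*j+2)*Z2 = (N+1)*X1" "(2*j+1)*X1 = (N-2*j)*X0" "N+1 \<noteq> 0"
  shows "-2/(N+1)*Z2*(1+j)*(2*(1+j)+v)*W1 = -(N-2*j)*X0*W"
proof -
  have "-2/(N+1)*Z2*(1+j)*(2*(1+j)+v)*W1 = -1/(N+1)*((2*j+2)*Z2)*(W1*(2*j+v+2))"
    using assms(4) by (simp add: field_simps)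
  also have "\<dots> = -1/(N+1)*(N+1)*(X1*(2*j+1))*W" unfolding assms(1,2) using assms(4) by (simp add: field_simps)
  also have "\<dots> = -((2*j+1)*X1)*W" using assms(4) by simp
  also have "\<dots> = -(N-2*j)*X0*W" unfolding assms(3) by (simp add: algebra_simps)
  finally show ?thesis .
qed

definition GG :: "real \<Rightarrow> nat \<Rightarrow> nat \<Rightarrow> real" where
  "GG v n j = -2/(real n+1) * real (Suc n choose (2*j)) * real j * (2*real j+v) * ww v j"

lemma termwise:
  assumes V: "\<not> (v \<in> \<int> \<and> v < 0)"
  shows "(real n+v+1)*real (Suc n choose (2*j))*ww v j - (2*real n+v+1)*real (n choose (2*j))*ww v j
     = GG v n (Suc j) - GG v n j"
proof -
  have W: "ww v (Suc j) * (2 * real j + v + 2) = ww v j * (2 * real j + 1)" by (rule ww_Suc[OF V])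
  have F1: "real (Suc (Suc (2*j))) * real (Suc n choose Suc (Suc (2*j))) = real (Suc n) * real (n choose Suc (2*j))"
    using Suc_times_binomial_eq[of n "Suc (2*j)"] by (metis of_nat_mult mult.commute)
  have F2: "real (Suc (2*j)) * real (n choose Suc (2*j)) = (real n - real (2*j)) * real (n choose (2*j))"
    by (rule binom_F2)
  have F3: "(real n + 1 - real (2*j)) * real (Suc n choose (2*j)) = real (Suc n) * real (n choose (2*j))"
    by (rule binom_F3)
  have e1: "2 * Suc j = Suc (Suc (2*j))" by simp
  have G1': "GG v n (Suc j) = -2/(real n+1) * real (Suc n choose Suc (Suc (2*j))) * (1 + real j) * (2*(1 + real j)+v) * ww v (Suc j)"
    by (simp only: GG_def e1 of_nat_Suc)
  have F1': "(2*real j + 2) * real (Suc n choose Suc (Suc (2*j))) = (real n + 1) * real (n choose Suc (2*j))"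
    using F1 by (simp add: algebra_simps del: binomial_Suc_Suc)
  have F2': "(2*real j + 1) * real (n choose Suc (2*j)) = (real n - 2 * real j) * real (n choose (2*j))"
    using F2 by (simp add: algebra_simps del: binomial_Suc_Suc)
  have "-2/(real n+1) * real (Suc n choose Suc (Suc (2*j))) * (1 + real j) * (2*(1 + real j)+v) * ww v (Suc j)
      = -(real n - 2 * real j) * real (n choose (2*j)) * ww v j"
    by (rule alg_G1[OF W F1' F2']) simp
  with G1' have G1: "GG v n (Suc j) = -(real n - 2 * real j) * real (n choose (2*j)) * ww v j" by simp
  have G0: "GG v n j = 2/(real n+1) * real (Suc n choose (2*j)) * real j * (2*real j+v) * ww v j * (-1)"
    unfolding GG_def by simp
  have "(real n+v+1)*real (Suc n choose (2*j))*ww v j - (2*real n+v+1)*real (n choose (2*j))*ww v j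
     = -(real n-2*real j)*real (n choose (2*j))*ww v j + 2/(real n+1)*real (Suc n choose (2*j))*real j*(2*real j+v)*ww v j"
    by (rule alg_B) (use F3 in auto)
  then show ?thesis unfolding G1 G0 by simp
qed

lemma base_identity:
  assumes V: "\<not> (v \<in> \<int> \<and> v < 0)"
  shows "(\<Sum>j\<le>n. real (n choose (2*j)) * ww v j) = cc v n / 2^n"
proof (induction n)
  case 0 then show ?case by (simp add: ww_def cc_def)
next
  case (Suc n)
  have tel: "(\<Sum>j<Suc (Suc n). GG v n (Suc j) - GG v n j) = 0"
  proof -
    have "Suc n choose (2 * Suc (Suc n)) = 0" by (rule binomial_eq_0) simp
    then show ?thesis by (subst sum_lessThan_telescope) (simp add: GG_def del: binomial_Suc_Suc)
  qed
  have "(\<Sum>j<Suc (Suc n). (real n+v+1)*real (Suc n choose (2*j))*ww v j - (2*real n+v+1)*real (n choose (2*j))*ww v j) = 0"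
    using tel termwise[OF V] by simp
  then have "(real n+v+1) * (\<Sum>j<Suc (Suc n). real (Suc n choose (2*j))*ww v j) = (2*real n+v+1) * (\<Sum>j<Suc (Suc n). real (n choose (2*j))*ww v j)"
    by (simp add: sum_subtractf sum_distrib_left algebra_simps)
  moreover have "(\<Sum>j<Suc (Suc n). real (Suc n choose (2*j))*ww v j) = (\<Sum>j\<le>Suc n. real (Suc n choose (2*j))*ww v j)"
    by (simp add: lessThan_Suc_atMost)
  moreover have "(\<Sum>j<Suc (Suc n). real (n choose (2*j))*ww v j) = (\<Sum>j\<le>n. real (n choose (2*j))*ww v j)"
    by (simp add: lessThan_Suc_atMost)
  ultimately have eq: "(real n+v+1) * (\<Sum>j\<le>Suc n. real (Suc n choose (2*j))*ww v j) = (2*real n+v+1) * (cc v n / 2^n)"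
    using Suc.IH by simp
  have ne: "real n + v + 1 \<noteq> 0" by (rule ne3[OF V])
  have "cc v (Suc n) * (real n + v + 1) = 2 * (2 * real n + v + 1) * cc v n" by (rule cc_Suc[OF V])
  then have ccEq: "(real n+v+1) * (cc v (Suc n) / 2^Suc n) = (2*real n+v+1) * (cc v n / 2^n)"
    by (simp add: field_simps)
  have "(real n+v+1) * (\<Sum>j\<le>Suc n. real (Suc n choose (2*j))*ww v j) = (real n+v+1) * (cc v (Suc n) / 2^Suc n)"
    by (rule trans[OF eq ccEq[symmetric]])
  then show ?case using mult_left_cancel[OF ne] by blast
qed


lemma central_poch: "real ((2*k) choose k) * fact k = 4^k * pochhammer (1/2) k"
proof -
  have "real ((2*k) choose k) = fact (2*k) / (fact k * fact k)"
    by (simp add: binomial_fact)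
  moreover have "fact (2*k) = (2 ^ (2 * k) * pochhammer (1 / 2) k * fact k :: real)"
    by (rule fact_double)
  ultimately show ?thesis by (simp add: power_mult)
qed

lemma ww0: "ww 0 k = real ((2*k) choose k) / 4^k"
  using central_poch[of k] by (simp add: ww_def pochhammer_fact[symmetric] field_simps)

lemma cc0: "cc 0 k = real ((2*k) choose k)"
  by (simp add: cc_def pochhammer_fact[symmetric] binomial_fact)

lemma notnp1: fixes v :: real assumes V: "\<not> (v \<in> \<int> \<and> v < 0)" shows "v/2+1 \<notin> \<int>\<^sub>\<le>\<^sub>0"
proof
  assume "v/2+1 \<in> \<int>\<^sub>\<le>\<^sub>0"
  then obtain m where "v/2+1 = - real m" by (auto elim!: nonpos_Ints_cases')
  then have "v = - real (2*m+2)" by simp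
  then have "v \<in> \<int> \<and> v < 0" by simp
  with V show False by blast
qed

lemma notnp2: fixes v :: real assumes V: "\<not> (v \<in> \<int> \<and> v < 0)" shows "v+1 \<notin> \<int>\<^sub>\<le>\<^sub>0"
proof
  assume "v+1 \<in> \<int>\<^sub>\<le>\<^sub>0"
  then obtain m where "v+1 = - real m" by (auto elim!: nonpos_Ints_cases')
  then have "v = - real (m+1)" by simp
  then have "v \<in> \<int> \<and> v < 0" by simp
  with V show False by blast
qed

lemma Gamma_shift:
  fixes z :: real
  assumes "z \<notin> \<int>\<^sub>\<le>\<^sub>0"
  shows "Gamma (z + real m) = pochhammer z m * Gamma z"
proof -
  have "Gamma z \<noteq> 0" using assms by (simp add: Gamma_eq_zero_iff)
  then show ?thesis using pochhammer_Gamma[OF assms, of m] by (simp add: field_simps)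
qed

lemma conv_a:
  assumes V: "\<not> (v \<in> \<int> \<and> v < 0)"
  shows "inverse (gbinom ((2 * real k + v)/2) (v/2)) = fact k / pochhammer (v/2+1) k"
proof -
  have a1: "(2 * real k + v)/2 + 1 = (v/2+1) + real k" by simp
  have a2: "(2 * real k + v)/2 - v/2 + 1 = 1 + real k" by (simp add: field_simps)
  have G: "Gamma (v/2+1) \<noteq> 0" using notnp1[OF V] by (simp add: Gamma_eq_zero_iff)
  have P: "pochhammer (v/2+1) k \<noteq> (0::real)" by (rule poch_ne1[OF V])
  have "gbinom ((2 * real k + v)/2) (v/2) = pochhammer (v/2+1) k * Gamma (v/2+1) / (Gamma (v/2+1) * fact k)"
    unfolding gbinom_def a1 a2 Gamma_shift[OF notnp1[OF V]] Gamma_fact by simp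
  also have "\<dots> = pochhammer (v/2+1) k / fact k" using G by simp
  finally show ?thesis by simp
qed

lemma conv_b:
  assumes V: "\<not> (v \<in> \<int> \<and> v < 0)"
  shows "gbinom (2 * real k + v) ((2 * real k + v)/2) * inverse (gbinom (real k + v) (v/2)) = cc v k"
proof -
  have a1: "2 * real k + v + 1 = (v+1) + real (2*k)" by simp
  have a2: "(2 * real k + v)/2 + 1 = (v/2+1) + real k" by simp
  have a3: "2 * real k + v - (2 * real k + v)/2 + 1 = (v/2+1) + real k" by (simp add: field_simps)
  have a4: "real k + v + 1 = (v+1) + real k" by simp
  have a5: "real k + v - v/2 + 1 = (v/2+1) + real k" by (simp add: field_simps)
  have G1: "Gamma (v/2+1) \<noteq> 0" using notnp1[OF V] by (simp add: Gamma_eq_zero_iff)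
  have G2: "Gamma (v+1) \<noteq> 0" using notnp2[OF V] by (simp add: Gamma_eq_zero_iff)
  have P1: "pochhammer (v/2+1) k \<noteq> (0::real)" by (rule poch_ne1[OF V])
  have P2: "pochhammer (v+1) k \<noteq> (0::real)" by (rule poch_ne2[OF V])
  have "gbinom (2 * real k + v) ((2 * real k + v)/2) * inverse (gbinom (real k + v) (v/2))
     = (pochhammer (v+1) (2*k) * Gamma (v+1)) / ((pochhammer (v/2+1) k * Gamma (v/2+1)) * (pochhammer (v/2+1) k * Gamma (v/2+1)))
       * inverse ((pochhammer (v+1) k * Gamma (v+1)) / (Gamma (v/2+1) * (pochhammer (v/2+1) k * Gamma (v/2+1))))"
    unfolding gbinom_def a1 a2 a3 a4 a5 Gamma_shift[OF notnp1[OF V]] Gamma_shift[OF notnp2[OF V]] ..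
  also have "\<dots> = cc v k" unfolding cc_def using G1 G2 P1 P2 by (simp add: field_simps)
  finally show ?thesis .
qed


definition al :: "real \<Rightarrow> nat \<Rightarrow> real" where
  "al v m = (if even m then ww v (m div 2) else 0)"

lemma evsum: "(\<Sum>m<2*(N::nat). (if even m then g m else (0::real))) = (\<Sum>j<N. g (2*j))"
  by (induction N) auto

lemma al_sum:
  "(\<Sum>m\<le>n. real (n choose m) * al v m * f m) = (\<Sum>j\<le>n div 2. real (n choose (2*j)) * ww v j * f (2*j))"
proof -
  have "(\<Sum>m\<le>n. real (n choose m) * al v m * f m) = (\<Sum>m<2 * Suc n. real (n choose m) * al v m * f m)"
    by (rule sum.mono_neutral_left) auto
  also have "\<dots> = (\<Sum>m<2 * Suc n. (if even m then real (n choose m) * ww v (m div 2) * f m else 0))"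
    by (rule sum.cong) (auto simp: al_def)
  also have "\<dots> = (\<Sum>j<Suc n. real (n choose (2*j)) * ww v j * f (2*j))"
    using evsum[of "\<lambda>m. real (n choose m) * ww v (m div 2) * f m" "Suc n"] by simp
  also have "\<dots> = (\<Sum>j\<le>n div 2. real (n choose (2*j)) * ww v j * f (2*j))"
    by (rule sum.mono_neutral_right) auto
  finally show ?thesis .
qed

lemma base_al:
  assumes V: "\<not> (v \<in> \<int> \<and> v < 0)"
  shows "cc v k / 2^k = (\<Sum>m\<le>k. real (k choose m) * al v m)"
proof -
  have "(\<Sum>m\<le>k. real (k choose m) * al v m) = (\<Sum>m\<le>k. real (k choose m) * al v m * 1)" by simp
  also have "\<dots> = (\<Sum>j\<le>k div 2. real (k choose (2*j)) * ww v j * 1)" by (rule al_sum)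
  also have "\<dots> = (\<Sum>j\<le>k. real (k choose (2*j)) * ww v j * 1)"
    by (rule sum.mono_neutral_left) auto
  also have "\<dots> = cc v k / 2^k" using base_identity[OF V] by simp
  finally show ?thesis by simp
qed

lemma main3:
  assumes V: "\<not> (v \<in> \<int> \<and> v < 0)"
  shows "(\<Sum>k\<le>n div 2. real (n choose (2*k)) * 2^(n - 2*k) * (4^k * ww v k) * H2 (2*k))
     = cc v n * H2 n - (\<Sum>k<n. cc v k * 2^(n - k) * gg n k)"
proof -
  have I: "(\<Sum>m\<le>n. real (n choose m) * al v m * H2 m) = cc v n / 2^n * H2 n - (\<Sum>k<n. cc v k / 2^k * gg n k)"
    by (rule gen_I) (rule base_al[OF V])
  have L: "(\<Sum>m\<le>n. real (n choose m) * al v m * H2 m) = (\<Sum>j\<le>n div 2. real (n choose (2*j)) * ww v j * H2 (2*j))"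
    by (rule al_sum)
  have "(\<Sum>k\<le>n div 2. real (n choose (2*k)) * 2^(n - 2*k) * (4^k * ww v k) * H2 (2*k))
      = 2^n * (\<Sum>j\<le>n div 2. real (n choose (2*j)) * ww v j * H2 (2*j))"
  proof -
    have "\<And>k. k \<le> n div 2 \<Longrightarrow> (2::real)^(n - 2*k) * 4^k = 2^n"
    proof -
      fix k assume "k \<le> n div 2"
      then have "n - 2*k + 2*k = n" by simp
      then have "(2::real)^(n - 2*k) * 2^(2*k) = 2^n" by (metis power_add)
      then show "(2::real)^(n - 2*k) * 4^k = 2^n" by (simp add: power_mult)
    qed
    then have "\<And>k. k \<in> {..n div 2} \<Longrightarrow> real (n choose (2*k)) * 2^(n - 2*k) * (4^k * ww v k) * H2 (2*k)
        = 2^n * (real (n choose (2*k)) * ww v k * H2 (2*k))"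
    proof -
      fix k assume "k \<in> {..n div 2}"
      then have e: "(2::real)^(n - 2*k) * 4^k = 2^n" using \<open>\<And>k. k \<le> n div 2 \<Longrightarrow> _\<close> by simp
      have "real (n choose (2*k)) * 2^(n - 2*k) * (4^k * ww v k) * H2 (2*k)
         = ((2::real)^(n - 2*k) * 4^k) * (real (n choose (2*k)) * ww v k * H2 (2*k))"
        by (simp only: mult_ac)
      then show "real (n choose (2*k)) * 2^(n - 2*k) * (4^k * ww v k) * H2 (2*k)
        = 2^n * (real (n choose (2*k)) * ww v k * H2 (2*k))" unfolding e .
    qed
    then show ?thesis
      by (simp only: sum_distrib_left) (rule sum.cong, rule refl)
  qed
  also have "\<dots> = cc v n * H2 n - (\<Sum>k<n. cc v k * 2^(n - k) * gg n k)"
  proof -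
    have "\<And>k. k < n \<Longrightarrow> (2::real)^n / 2^k = 2^(n-k)"
      by (simp add: power_diff)
    then have "(\<Sum>k<n. 2^n * (cc v k / 2^k * gg n k)) = (\<Sum>k<n. cc v k * 2^(n - k) * gg n k)"
      by (intro sum.cong) (auto simp: field_simps)
    then show ?thesis unfolding L[symmetric] I
      by (simp add: right_diff_distrib sum_distrib_left)
  qed
  finally show ?thesis .
qed


lemma main4:
  assumes V: "\<not> (v \<in> \<int> \<and> v < 0)"
  shows "(\<Sum>k\<le>n. (-1)^k * real (n choose k) * (1/2)^k * cc v k * H2 k)
     = - (\<Sum>k<n div 2. ww v k * gg n (2*k))
       + (if even n then ww v (n div 2) * H2 n else - (ww v ((n - 1) div 2) * (1 / real n)))"
proof -
  define a' where "a' k = (-1)^k * (cc v k / 2^k)" for k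
  define b' where "b' k = (-1)^k * al v k" for k
  have hyp: "b' k = (\<Sum>m\<le>k. real (k choose m) * a' m)" for k
  proof -
    have "(\<Sum>m\<le>k. real (k choose m) * (-1)^m * (cc v m / 2^m)) = (-1)^k * al v k"
      by (rule gen_inv) (rule base_al[OF V])
    then show ?thesis unfolding a'_def b'_def by (simp add: mult.assoc)
  qed
  have I: "(\<Sum>m\<le>n. real (n choose m) * a' m * H2 m) = b' n * H2 n - (\<Sum>k<n. b' k * gg n k)"
    by (rule gen_I) (rule hyp)
  have L: "(\<Sum>k\<le>n. (-1)^k * real (n choose k) * (1/2)^k * cc v k * H2 k) = (\<Sum>m\<le>n. real (n choose m) * a' m * H2 m)"
    unfolding a'_def by (rule sum.cong) (auto simp: power_one_over field_simps)
  have B: "(\<Sum>k<n. b' k * gg n k) = (\<Sum>k<n. (if even k then ww v (k div 2) * gg n k else 0))"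
    by (rule sum.cong) (auto simp: b'_def al_def)
  show ?thesis
  proof (cases "even n")
    case True
    then obtain p where p: "n = 2*p" by blast
    have "(\<Sum>k<n. b' k * gg n k) = (\<Sum>j<p. ww v j * gg n (2*j))"
    proof -
      have "(\<Sum>k<n. b' k * gg n k) = (\<Sum>k<2*p. (if even k then ww v (k div 2) * gg n k else 0))"
        using B p by simp
      then show ?thesis using evsum[of "\<lambda>k. ww v (k div 2) * gg n k" p] by simp
    qed
    moreover have "b' n = ww v (n div 2)" using True by (simp add: b'_def al_def)
    ultimately show ?thesis unfolding L I using True p by simp
  next
    case False
    then obtain p where p: "n = 2*p+1" by (metis oddE)
    have "(\<Sum>k<n. b' k * gg n k) = (\<Sum>k<2*p. b' k * gg n k) + b' (2*p) * gg n (2*p)"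
      unfolding p by simp
    also have "(\<Sum>k<2*p. b' k * gg n k) = (\<Sum>j<p. ww v j * gg n (2*j))"
    proof -
      have "(\<Sum>k<2*p. b' k * gg n k) = (\<Sum>k<2*p. (if even k then ww v (k div 2) * gg n k else 0))"
        by (rule sum.cong) (auto simp: b'_def al_def)
      then show ?thesis using evsum[of "\<lambda>k. ww v (k div 2) * gg n k" p] by simp
    qed
    also have "b' (2*p) * gg n (2*p) = ww v p * (1 / real n)"
      unfolding p by (simp add: b'_def al_def gg_def H_Suc)
    finally have S: "(\<Sum>k<n. b' k * gg n k) = (\<Sum>j<p. ww v j * gg n (2*j)) + ww v p * (1 / real n)" .
    have "b' n = 0" using False by (simp add: b'_def al_def)
    moreover have "n div 2 = p" "(n - 1) div 2 = p" using p by simp_all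
    ultimately show ?thesis unfolding L I S using False by simp
  qed
qed


lemma conv_c:
  assumes V: "\<not> (v \<in> \<int> \<and> v < 0)"
  shows "X * real ((2*k) choose k) * inverse (gbinom ((2 * real k + v)/2) (v/2)) = X * (4^k * ww v k)"
  unfolding conv_a[OF V] ww_def using central_poch[of k] by (simp add: field_simps)

lemma conv_d:
  assumes V: "\<not> (v \<in> \<int> \<and> v < 0)"
  shows "real ((2*k) choose k) * (1/2)^(2*k) * inverse (gbinom ((2 * real k + v)/2) (v/2)) = ww v k"
proof -
  have "real ((2*k) choose k) * (1/2)^(2*k) * inverse (gbinom ((2 * real k + v)/2) (v/2))
      = (1/2)^(2*k) * real ((2*k) choose k) * inverse (gbinom ((2 * real k + v)/2) (v/2))" by simp
  also have "\<dots> = (1/2)^(2*k) * (4^k * ww v k)" by (rule conv_c[OF V])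
  also have "\<dots> = ww v k" by (simp add: power_mult power_one_over)
  finally show ?thesis .
qed

lemma conv_b':
  assumes V: "\<not> (v \<in> \<int> \<and> v < 0)"
  shows "gbinom (2 * real k + v) ((2 * real k + v)/2) * X * inverse (gbinom (real k + v) (v/2)) = cc v k * X"
  using conv_b[OF V, of k] by (simp add: mult_ac)

lemma conv_b'':
  assumes V: "\<not> (v \<in> \<int> \<and> v < 0)"
  shows "X * gbinom (2 * real k + v) ((2 * real k + v)/2) * inverse (gbinom (real k + v) (v/2)) = X * cc v k"
  using conv_b[OF V, of k] by (simp add: mult_ac)

lemma ww0': "ww 0 k = real ((2*k) choose k) * (1/2)^(2*k)"
  by (simp add: ww0 power_mult power_one_over)

lemma part3:
  assumes V: "\<not> (v \<in> \<int> \<and> v < 0)"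
  shows "(\<Sum>k=0..n div 2. real (n choose (2*k)) * 2^(n - 2*k) * real ((2*k) choose k)
          * inverse (gbinom ((2 * real k + v)/2) (v/2)) * H2 (2*k))
       = gbinom (2 * real n + v) ((2 * real n + v)/2) * inverse (gbinom (real n + v) (v/2)) * H2 n
         - (\<Sum>k<n. gbinom (2 * real k + v) ((2 * real k + v)/2) * 2^(n - k) * inverse (gbinom (real k + v) (v/2))
              * (H n - H k) / (real n - real k))"
proof -
  have "(\<Sum>k=0..n div 2. real (n choose (2*k)) * 2^(n - 2*k) * real ((2*k) choose k)
          * inverse (gbinom ((2 * real k + v)/2) (v/2)) * H2 (2*k))
      = (\<Sum>k\<le>n div 2. real (n choose (2*k)) * 2^(n - 2*k) * (4^k * ww v k) * H2 (2*k))"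
    by (simp only: atLeast0AtMost conv_c[OF V])
  also have "\<dots> = cc v n * H2 n - (\<Sum>k<n. cc v k * 2^(n - k) * gg n k)" by (rule main3[OF V])
  also have "\<dots> = gbinom (2 * real n + v) ((2 * real n + v)/2) * inverse (gbinom (real n + v) (v/2)) * H2 n
         - (\<Sum>k<n. gbinom (2 * real k + v) ((2 * real k + v)/2) * 2^(n - k) * inverse (gbinom (real k + v) (v/2))
              * (H n - H k) / (real n - real k))"
    by (simp only: conv_b[OF V] conv_b'[OF V]) (simp add: gg_def)
  finally show ?thesis .
qed

lemma part4:
  assumes V: "\<not> (v \<in> \<int> \<and> v < 0)"
  shows "(\<Sum>k=0..n. (-1)^k * real (n choose k) * (1/2)^k * gbinom (2 * real k + v) ((2 * real k + v)/2)
          * inverse (gbinom (real k + v) (v/2)) * H2 k)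
       = - (\<Sum>k<n div 2. real ((2*k) choose k) * (1/2)^(2*k) * inverse (gbinom ((2 * real k + v)/2) (v/2))
              * (H n - H (2*k)) / (real n - real (2*k)))
         + (if even n then real (n choose (n div 2)) * (1/2)^n * inverse (gbinom ((real n + v)/2) (v/2)) * H2 n
            else - real ((n - 1) choose ((n - 1) div 2)) * (1/2)^(n - 1)
                   * inverse (gbinom ((real (n - 1) + v)/2) (v/2)) * (1 / real n))"
proof -
  have "(\<Sum>k=0..n. (-1)^k * real (n choose k) * (1/2)^k * gbinom (2 * real k + v) ((2 * real k + v)/2)
          * inverse (gbinom (real k + v) (v/2)) * H2 k)
      = (\<Sum>k\<le>n. (-1)^k * real (n choose k) * (1/2)^k * cc v k * H2 k)"
    by (simp only: atLeast0AtMost conv_b''[OF V])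
  also have "\<dots> = - (\<Sum>k<n div 2. ww v k * gg n (2*k))
       + (if even n then ww v (n div 2) * H2 n else - (ww v ((n - 1) div 2) * (1 / real n)))"
    by (rule main4[OF V])
  also have "(\<Sum>k<n div 2. ww v k * gg n (2*k)) = (\<Sum>k<n div 2. real ((2*k) choose k) * (1/2)^(2*k) * inverse (gbinom ((2 * real k + v)/2) (v/2))
              * (H n - H (2*k)) / (real n - real (2*k)))"
    by (simp only: conv_d[OF V]) (simp add: gg_def)
  also have "(if even n then ww v (n div 2) * H2 n else - (ww v ((n - 1) div 2) * (1 / real n)))
     = (if even n then real (n choose (n div 2)) * (1/2)^n * inverse (gbinom ((real n + v)/2) (v/2)) * H2 n
            else - real ((n - 1) choose ((n - 1) div 2)) * (1/2)^(n - 1)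
                   * inverse (gbinom ((real (n - 1) + v)/2) (v/2)) * (1 / real n))"
  proof (cases "even n")
    case True
    then obtain p where p: "n = 2*p" by blast
    have e: "n div 2 = p" "real n = 2 * real p" using p by simp_all
    show ?thesis using True unfolding e unfolding p conv_d[OF V] by simp
  next
    case False
    then obtain p where p: "n = 2*p+1" by (metis oddE)
    have e: "n - 1 = 2*p" "(n - 1) div 2 = p" using p by simp_all
    have e2: "real (2*p) = 2 * real p" by simp
    show ?thesis using False conv_d[OF V, of p] unfolding e unfolding e2 by simp
  qed
  finally show ?thesis .
qed


lemma part1:
  "(\<Sum>k=0..n div 2. real (n choose (2*k)) * 2^(n - 2*k) * real ((2*k) choose k) * H2 (2*k))
     = real ((2*n) choose n) * H2 n
       - (\<Sum>k<n. real ((2*k) choose k) * 2^(n - k) * (H n - H k) / (real n - real k))"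
proof -
  have V0: "\<not> ((0::real) \<in> \<int> \<and> (0::real) < 0)" by simp
  have c: "\<And>k. 4^k * ww 0 k = real ((2*k) choose k)" by (simp add: ww0)
  have "(\<Sum>k=0..n div 2. real (n choose (2*k)) * 2^(n - 2*k) * real ((2*k) choose k) * H2 (2*k))
      = (\<Sum>k\<le>n div 2. real (n choose (2*k)) * 2^(n - 2*k) * (4^k * ww 0 k) * H2 (2*k))"
    by (simp only: atLeast0AtMost c)
  also have "\<dots> = cc 0 n * H2 n - (\<Sum>k<n. cc 0 k * 2^(n - k) * gg n k)" by (rule main3[OF V0])
  also have "\<dots> = real ((2*n) choose n) * H2 n
       - (\<Sum>k<n. real ((2*k) choose k) * 2^(n - k) * (H n - H k) / (real n - real k))"
    by (simp add: cc0 gg_def)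
  finally show ?thesis .
qed

lemma part2:
  "(\<Sum>k=0..n. (-1)^k * real (n choose k) * (1/2)^k * real ((2*k) choose k) * H2 k)
     = - (\<Sum>k<n div 2. real ((2*k) choose k) * (1/2)^(2*k) * (H n - H (2*k)) / (real n - real (2*k)))
       + (if even n then (1/2)^n * real (n choose (n div 2)) * H2 n
          else - ((1/2)^(n - 1) * real ((n - 1) choose ((n - 1) div 2)) * (1 / real n)))"
proof -
  have V0: "\<not> ((0::real) \<in> \<int> \<and> (0::real) < 0)" by simp
  have "(\<Sum>k=0..n. (-1)^k * real (n choose k) * (1/2)^k * real ((2*k) choose k) * H2 k)
      = (\<Sum>k\<le>n. (-1)^k * real (n choose k) * (1/2)^k * cc 0 k * H2 k)"
    by (simp only: atLeast0AtMost cc0)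
  also have "\<dots> = - (\<Sum>k<n div 2. ww 0 k * gg n (2*k))
       + (if even n then ww 0 (n div 2) * H2 n else - (ww 0 ((n - 1) div 2) * (1 / real n)))"
    by (rule main4[OF V0])
  also have "(\<Sum>k<n div 2. ww 0 k * gg n (2*k)) = (\<Sum>k<n div 2. real ((2*k) choose k) * (1/2)^(2*k) * (H n - H (2*k)) / (real n - real (2*k)))"
    by (simp add: ww0' gg_def)
  also have "(if even n then ww 0 (n div 2) * H2 n else - (ww 0 ((n - 1) div 2) * (1 / real n)))
     = (if even n then (1/2)^n * real (n choose (n div 2)) * H2 n
          else - ((1/2)^(n - 1) * real ((n - 1) choose ((n - 1) div 2)) * (1 / real n)))"
  proof (cases "even n")
    case True
    then obtain p where p: "n = 2*p" by blast
    show ?thesis using True unfolding p by (simp add: ww0')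
  next
    case False
    then obtain p where p: "n = 2*p+1" by (metis oddE)
    have e: "n - 1 = 2*p" "(n - 1) div 2 = p" using p by simp_all
    show ?thesis using False unfolding e by (simp add: ww0')
  qed
  finally show ?thesis .
qed

theorem theorem35:
  fixes n :: nat
  shows
  "(\<Sum>k=0..n div 2. real (n choose (2*k)) * 2^(n - 2*k) * real ((2*k) choose k) * H2 (2*k))
     = real ((2*n) choose n) * H2 n
       - (\<Sum>k<n. real ((2*k) choose k) * 2^(n - k) * (H n - H k) / (real n - real k))
   \<and>
   (\<Sum>k=0..n. (-1)^k * real (n choose k) * (1/2)^k * real ((2*k) choose k) * H2 k)
     = - (\<Sum>k<n div 2. real ((2*k) choose k) * (1/2)^(2*k) * (H n - H (2*k)) / (real n - real (2*k)))
       + (if even n then (1/2)^n * real (n choose (n div 2)) * H2 n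
          else - ((1/2)^(n - 1) * real ((n - 1) choose ((n - 1) div 2)) * (1 / real n)))
   \<and>
   (\<forall>v::real. \<not> (v \<in> \<int> \<and> v < 0) \<longrightarrow>
     (\<Sum>k=0..n div 2. real (n choose (2*k)) * 2^(n - 2*k) * real ((2*k) choose k)
          * inverse (gbinom ((2 * real k + v)/2) (v/2)) * H2 (2*k))
       = gbinom (2 * real n + v) ((2 * real n + v)/2) * inverse (gbinom (real n + v) (v/2)) * H2 n
         - (\<Sum>k<n. gbinom (2 * real k + v) ((2 * real k + v)/2) * 2^(n - k) * inverse (gbinom (real k + v) (v/2))
              * (H n - H k) / (real n - real k))
     \<and>
     (\<Sum>k=0..n. (-1)^k * real (n choose k) * (1/2)^k * gbinom (2 * real k + v) ((2 * real k + v)/2)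
          * inverse (gbinom (real k + v) (v/2)) * H2 k)
       = - (\<Sum>k<n div 2. real ((2*k) choose k) * (1/2)^(2*k) * inverse (gbinom ((2 * real k + v)/2) (v/2))
              * (H n - H (2*k)) / (real n - real (2*k)))
         + (if even n then real (n choose (n div 2)) * (1/2)^n * inverse (gbinom ((real n + v)/2) (v/2)) * H2 n
            else - real ((n - 1) choose ((n - 1) div 2)) * (1/2)^(n - 1)
                   * inverse (gbinom ((real (n - 1) + v)/2) (v/2)) * (1 / real n)))"
  using part1[of n] part2[of n] part3 part4 by blast

end
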